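(* $\mathbf{E}[\lfloor r/2\rfloor] = 2/3 \pm O(1/i)$ and $\mathbf{E}[\lceil r/2 \rceil] = 4/3 \pm O(1/i)$.
   Context: In 2Merge$(A,B,T)$ with $T=(t_1,\dots,t_{i-2})$ sorted, $i$ even, $i\ge4$, after ensuring $A<B$, Step 2 compares $A$ with $t_{\lceil(1-2^{-r/2})i\rceil}$ for $r=1,2,\dots$ up to $2\lg i$ and stops at the first $r$ with $A<t_{\lceil(1-2^{-r/2})i\rceil}$; $r$ denotes this number of comparisons. The two inserted elements occupy uniformly random distinct positions among the $i$ positions, so given $A<B$, $\mathbf{Pr}[t_{\ell-1}<A<t_\ell]=(i-\ell)/\binom{i}{2}$; consequently $\mathbf{Pr}[r]=2^{-r}\pm O\!\left(\frac{1}{2^{r/2}i}\right)$. The expectations are over this distribution of $r$. *)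

theory Defs
  imports Complex_Main
begin

text \<open>Index of the r-th probe in Step 2 of 2Merge: ceiling((1 - 2^(-r/2)) i).\<close>
definition probe_index :: "nat \<Rightarrow> nat \<Rightarrow> int" where
  "probe_index i r = \<lceil>(1 - 2 powr (- real r / 2)) * real i\<rceil>"

definition max_probes :: "nat \<Rightarrow> nat" where
  "max_probes i = nat \<lfloor>2 * log 2 (real i)\<rfloor>"

text \<open>Number of comparisons r in Step 2 when t_(l-1) < A < t_l:
  A < t_k iff l \<le> k, so Step 2 stops at the first r with l \<le> probe_index i r,
  and in any case after max_probes i comparisons.\<close>
definition num_cmp :: "nat \<Rightarrow> nat \<Rightarrow> nat" where
  "num_cmp i l = (LEAST r. 1 \<le> r \<and> (int l \<le> probe_index i r \<or> max_probes i \<le> r))"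

text \<open>Pr[t_(l-1) < A < t_l] = (i - l) / (i choose 2), for l = 1..i-1.\<close>
definition pos_prob :: "nat \<Rightarrow> nat \<Rightarrow> real" where
  "pos_prob i l = (real i - real l) / real (i choose 2)"

definition expect_r :: "nat \<Rightarrow> (nat \<Rightarrow> real) \<Rightarrow> real" where
  "expect_r i g = (\<Sum>l = 1..i - 1. pos_prob i l * g (num_cmp i l))"

end

theory Submission
  imports Defs
begin

definition vv :: "nat \<Rightarrow> real" where "vv r = 2 powr (- real r / 2)"

lemma vv_pos: "0 < vv r" by (simp add: vv_def)

lemma vv_sq: "vv r ^ 2 = (1/2) ^ r"
proof -
  have "vv r ^ 2 = vv r * vv r" by (simp add: power2_eq_square)
  also have "\<dots> = 2 powr (- real r)" unfolding vv_def by (simp add: powr_add[symmetric])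
  also have "\<dots> = (1/2)^r" by (simp add: powr_minus powr_realpow power_one_over inverse_eq_divide)
  finally show ?thesis .
qed

lemma vv_mono: "r \<le> r' \<Longrightarrow> vv r' \<le> vv r"
  unfolding vv_def by (auto intro: powr_mono simp: divide_simps)

lemma vv_le1: "vv r \<le> 1"
  using vv_mono[of 0 r] by (simp add: vv_def)

lemma vv_even: "vv (2*k) = (1/2)^k"
proof -
  have "vv (2*k) = 2 powr (- real k)" unfolding vv_def by simp
  thus ?thesis by (simp add: powr_minus powr_realpow power_one_over inverse_eq_divide)
qed

lemma probe_vv: "probe_index i r = int i - \<lfloor>vv r * real i\<rfloor>"
proof -
  have "(1 - 2 powr (- real r / 2)) * real i = of_int (int i) - vv r * real i"
    by (simp add: vv_def algebra_simps)
  then have "probe_index i r = \<lceil>of_int (int i) - vv r * real i\<rceil>" unfolding probe_index_def by (simp add: vv_def)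
  also have "\<dots> = int i - \<lfloor>vv r * real i\<rfloor>"
    by (metis ceiling_add_of_int ceiling_minus uminus_add_conv_diff add.commute)
  finally show ?thesis .
qed

lemma choose2_real: "real (i choose 2) = real i * (real i - 1) / 2"
proof (cases i)
  case 0 then show ?thesis by simp
next
  case (Suc j)
  have "even (i * (i - 1))" by (cases "even i") auto
  then show ?thesis using Suc by (simp add: choose_two real_of_nat_div algebra_simps)
qed

lemma num_upper:
  fixes x m i :: real
  assumes "0 \<le> m" "m \<le> x" "x \<le> i" "2 \<le> i" "m = 0 \<or> 1 \<le> m"
  shows "m * (m - 1) / (i * (i - 1)) \<le> (x / i)^2"
proof -
  have D: "0 < i * (i - 1)" using assms by simp
  show ?thesis
  proof (cases "m = 0")
    case True then show ?thesis by simp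
  next
    case False
  have a: "m * (m - 1) \<le> x * (x - 1)"
    using assms False by (intro mult_mono) auto
  have b: "x * (x - 1) * i \<le> x^2 * (i - 1)"
  proof -
    have "x * (x - 1) * i - x^2 * (i - 1) = x * (x - i)" by (simp add: algebra_simps power2_eq_square)
    moreover have "x * (x - i) \<le> 0" using assms by (simp add: mult_nonneg_nonpos)
    ultimately show ?thesis by simp
  qed
  have "m * (m - 1) / (i * (i - 1)) \<le> x * (x - 1) / (i * (i - 1))"
    using a D by (simp add: divide_right_mono)
  also have "\<dots> \<le> (x / i)^2"
    using b D assms by (simp add: divide_simps power2_eq_square algebra_simps)
  finally show ?thesis .
  qed
qed

lemma num_lower:
  fixes x m i :: real
  assumes "0 \<le> m" "m \<le> x" "x < m + 1" "x \<le> i" "2 \<le> i" "m = 0 \<or> 1 \<le> m"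
  shows "(x / i)^2 - 6 * (x / i) / i \<le> m * (m - 1) / (i * (i - 1))"
proof -
  have D: "0 < i * (i - 1)" using assms by simp
  have a: "x^2 - 3 * x \<le> m * (m - 1)"
  proof (cases "1 \<le> x")
    case True
    have "(x - 1)^2 \<le> m^2" using True assms by (intro power_mono) auto
    then show ?thesis using assms by (simp add: algebra_simps power2_eq_square)
  next
    case False
    then have "x^2 \<le> x" using assms by (simp add: power2_eq_square mult_left_le)
    moreover have "m = 0" using assms False by auto
    ultimately show ?thesis using assms by simp
  qed
  have b: "(x^2 - 6 * x) * (i * (i - 1)) \<le> (x^2 - 3 * x) * i^2"
  proof -
    have "(x^2 - 3 * x) * i^2 - (x^2 - 6 * x) * (i * (i - 1)) = x * i * (3 * i + x - 6)"
      by (simp add: algebra_simps power2_eq_square)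
    moreover have "0 \<le> x * i * (3 * i + x - 6)" using assms by simp
    ultimately show ?thesis by simp
  qed
  have "(x / i)^2 - 6 * (x / i) / i = (x^2 - 6 * x) / i^2"
    using assms by (simp add: field_simps power2_eq_square)
  also have "\<dots> \<le> (x^2 - 3 * x) / (i * (i - 1))"
    using b D assms by (simp add: divide_simps)
  also have "\<dots> \<le> m * (m - 1) / (i * (i - 1))"
    using a D by (simp add: divide_right_mono)
  finally show ?thesis .
qed

lemma probe_mono: "r \<le> r' \<Longrightarrow> probe_index i r \<le> probe_index i r'"
  unfolding probe_vv using vv_mono[of r r'] 
  by (simp add: floor_mono mult_right_mono)

lemma numcmp_ge:
  assumes "1 \<le> l" "1 \<le> max_probes i"
  shows "(Suc r \<le> num_cmp i l) \<longleftrightarrow> \<not> (int l \<le> probe_index i r \<or> max_probes i \<le> r)"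
proof -
  let ?P = "\<lambda>r. 1 \<le> r \<and> (int l \<le> probe_index i r \<or> max_probes i \<le> r)"
  have ex: "?P (max_probes i)" using assms by simp
  have L: "?P (num_cmp i l)" unfolding num_cmp_def using ex by (rule LeastI)
  show ?thesis
  proof
    assume a: "Suc r \<le> num_cmp i l"
    show "\<not> (int l \<le> probe_index i r \<or> max_probes i \<le> r)"
    proof
      assume c: "int l \<le> probe_index i r \<or> max_probes i \<le> r"
      show False
      proof (cases "r = 0")
        case True
        then have "probe_index i r = 0" by (simp add: probe_index_def)
        with c True assms show False by simp
      next
        case False
        then have "?P r" using c by simp
        then have "num_cmp i l \<le> r" unfolding num_cmp_def by (rule Least_le)
        with a show False by simp
      qed
    qed
  next
    assume a: "\<not> (int l \<le> probe_index i r \<or> max_probes i \<le> r)"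
    show "Suc r \<le> num_cmp i l"
    proof (rule ccontr)
      assume "\<not> Suc r \<le> num_cmp i l"
      then have le: "num_cmp i l \<le> r" by simp
      from L have "int l \<le> probe_index i (num_cmp i l) \<or> max_probes i \<le> num_cmp i l" by simp
      then show False using a le probe_mono[OF le, of i] by auto
    qed
  qed
qed

lemma numcmp_le:
  assumes "1 \<le> max_probes i"
  shows "num_cmp i l \<le> max_probes i"
  unfolding num_cmp_def using assms by (intro Least_le) simp

lemma sumS:
  "m \<le> i \<Longrightarrow> (\<Sum>l = 1..i-1. if i < l + m then real i - real l else 0) = real m * (real m - 1) / 2"
proof (induction m)
  case 0
  have "(\<Sum>l = 1..i-1. if i < l + 0 then real i - real l else 0) = 0" by (intro sum.neutral) auto
  then show ?case by simp
next
  case (Suc m)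
  have split: "(\<lambda>l. if i < l + Suc m then real i - real l else 0) =
        (\<lambda>l. (if i < l + m then real i - real l else 0) + (if l = i - m then real i - real l else 0))"
    using Suc.prems by (auto intro!: ext)
  have "(\<Sum>l = 1..i-1. if l = i - m then real i - real l else 0) = real m"
  proof (cases "m = 0")
    case True then show ?thesis by simp
  next
    case False
    then have "i - m \<in> {1..i-1}" using Suc.prems by auto
    then show ?thesis using Suc.prems by (simp add: sum.delta' of_nat_diff)
  qed
  then show ?case unfolding split sum.distrib using Suc by (simp add: algebra_simps)
qed

definition QQ :: "nat \<Rightarrow> nat \<Rightarrow> real" where
  "QQ i r = (\<Sum>l = 1..i-1. pos_prob i l * (if Suc r \<le> num_cmp i l then 1 else 0))"

lemma QQ_formula:
  assumes "2 \<le> i" "1 \<le> max_probes i"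
  shows "QQ i r = (if r < max_probes i then
     real (nat \<lfloor>vv r * real i\<rfloor>) * (real (nat \<lfloor>vv r * real i\<rfloor>) - 1) / (real i * (real i - 1)) else 0)"
proof -
  define m where "m = nat \<lfloor>vv r * real i\<rfloor>"
  have fl: "\<lfloor>vv r * real i\<rfloor> = int m" unfolding m_def using vv_pos[of r] by simp
  have ind: "(Suc r \<le> num_cmp i l) \<longleftrightarrow> r < max_probes i \<and> i < l + m" if "l \<in> {1..i-1}" for l
    using numcmp_ge[of l i r] that assms unfolding probe_vv fl by auto
  have mi: "m \<le> i"
  proof -
    have "vv r * real i \<le> real i" using vv_le1[of r] using mult_right_mono[of "vv r" 1 "real i"] by simp
    then have "\<lfloor>vv r * real i\<rfloor> \<le> int i" by (metis floor_mono floor_of_nat)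
    then show ?thesis using fl by simp
  qed
  have C: "real (i choose 2) = real i * (real i - 1) / 2" by (rule choose2_real)
  have "QQ i r = (\<Sum>l = 1..i-1. pos_prob i l * (if r < max_probes i \<and> i < l + m then 1 else 0))"
    unfolding QQ_def by (intro sum.cong) (simp_all add: ind)
  also have "\<dots> = (if r < max_probes i then (\<Sum>l = 1..i-1. if i < l + m then real i - real l else 0) / real (i choose 2) else 0)"
    by (auto simp: pos_prob_def sum_divide_distrib intro!: sum.cong)
  also have "\<dots> = (if r < max_probes i then real m * (real m - 1) / (real i * (real i - 1)) else 0)"
    unfolding sumS[OF mi] C by simp
  finally show ?thesis unfolding m_def .
qed

lemma QQ_bound:
  assumes "2 \<le> i" "1 \<le> max_probes i" "(1/2) ^ max_probes i \<le> 2 / (real i)^2"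
  shows "\<bar>QQ i r - vv r ^ 2\<bar> \<le> 6 * vv r / real i"
proof (cases "r < max_probes i")
  case True
  define m where "m = nat \<lfloor>vv r * real i\<rfloor>"
  define x where "x = vv r * real i"
  have Q: "QQ i r = real m * (real m - 1) / (real i * (real i - 1))"
    using QQ_formula[OF assms(1,2), of r] True unfolding m_def by simp
  have i2: "2 \<le> real i" using assms by simp
  have x0: "0 \<le> x" unfolding x_def using vv_pos[of r] by simp
  have mx: "real m \<le> x" "x < real m + 1" unfolding m_def x_def using x0 x_def by linarith+
  have xi: "x \<le> real i" unfolding x_def using vv_le1[of r] using mult_right_mono[of "vv r" 1 "real i"] by simp
  have m01: "real m = 0 \<or> 1 \<le> real m" by auto
  have xv: "x / real i = vv r" unfolding x_def using i2 by simp
  have u: "real m * (real m - 1) / (real i * (real i - 1)) \<le> vv r ^ 2"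
    using num_upper[of "real m" x "real i"] mx xi i2 m01 xv by simp
  have l: "vv r ^ 2 - 6 * vv r / real i \<le> real m * (real m - 1) / (real i * (real i - 1))"
    using num_lower[of "real m" x "real i"] mx xi i2 m01 xv by simp
  have "0 \<le> 6 * vv r / real i" using vv_pos[of r] i2 by simp
  then show ?thesis using u l Q by linarith
next
  case False
  have Q: "QQ i r = 0" using QQ_formula[OF assms(1,2), of r] False by simp
  have i2: "2 \<le> real i" using assms by simp
  have "2 / (real i)^2 \<le> 4 / (real i)^2" using i2 by (simp add: divide_right_mono)
  then have "vv (max_probes i) ^ 2 \<le> (2 / real i) ^ 2"
    using assms(3) vv_sq[of "max_probes i"] i2 by (simp add: power_divide)
  then have "vv (max_probes i) \<le> 2 / real i"
    using vv_pos[of "max_probes i"] i2 by (simp add: power_mono_iff)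
  then have v: "vv r \<le> 2 / real i" using vv_mono[of "max_probes i" r] False by simp
  have "vv r ^ 2 = vv r * vv r" by (simp add: power2_eq_square)
  also have "\<dots> \<le> vv r * (2 / real i)" using v vv_pos[of r] by (intro mult_left_mono) auto
  also have "\<dots> \<le> 6 * vv r / real i" using vv_pos[of r] i2 by (simp add: divide_simps)
  finally show ?thesis using Q vv_pos[of r] by simp
qed

lemma count_floor: "(\<Sum>k = 1..N. if 2 * k \<le> n then 1 else 0 :: real) = real (min N (n div 2))"
  by (induction N) (auto simp: min_def)

lemma count_ceil: "(\<Sum>k < N. if 2 * k + 1 \<le> n then 1 else 0 :: real) = real (min N ((n + 1) div 2))"
  by (induction N) (auto simp: min_def)

lemma geo1: "(\<Sum>k = 1..N. (1/2::real) ^ (2 * k - 1)) = 2/3 * (1 - (1/4) ^ N)"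
proof (induction N)
  case 0 then show ?case by simp
next
  case (Suc N)
  have "(1/2::real) ^ (2 * Suc N - 1) = 2 * (1/4) ^ Suc N"
  proof -
    have "(1/2::real) ^ (2 * Suc N - 1) = (1/2) ^ (2 * N + 1)" by simp
    also have "\<dots> = (1/2) * ((1/2)^2)^N" by (simp add: power_mult)
    also have "\<dots> = 2 * (1/4) ^ Suc N" by (simp add: power_one_over)
    finally show ?thesis .
  qed
  then show ?case using Suc by (simp add: algebra_simps power_one_over)
qed

lemma geo2: "(\<Sum>k < N. (1/4::real) ^ k) = 4/3 * (1 - (1/4) ^ N)"
  by (induction N) (simp_all add: algebra_simps)

lemma geo3: "(\<Sum>k < N. (1/2::real) ^ k) \<le> 2"
proof -
  have "(\<Sum>k < N. (1/2::real) ^ k) = 2 - 2 * (1/2)^N" by (induction N) (simp_all add: algebra_simps)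
  then show ?thesis by simp
qed

lemma maxp_facts:
  assumes "4 \<le> i"
  shows "1 \<le> max_probes i" "(1/2) ^ max_probes i \<le> 2 / (real i)^2" "(1/4::real) ^ max_probes i \<le> 1 / real i"
proof -
  let ?N = "max_probes i"
  have i4: "4 \<le> real i" using assms by simp
  have lg: "2 \<le> log 2 (real i)"
  proof -
    have "log 2 4 \<le> log 2 (real i)" using i4 by simp
    moreover have "log 2 (4::real) = 2"
      by (metis log2_of_power_eq mult_2 numeral_Bit0 of_nat_numeral power2_eq_square)
    ultimately show ?thesis by simp
  qed
  have fl: "real ?N = of_int \<lfloor>2 * log 2 (real i)\<rfloor>" unfolding max_probes_def using lg by simp
  have "real ?N > 2 * log 2 (real i) - 1" using fl by linarith
  then have "2 * log 2 (real i) \<le> real (?N + 1)" by simp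
  then have "2 powr (2 * log 2 (real i)) \<le> 2 powr real (?N + 1)" by simp
  moreover have "2 powr (2 * log 2 (real i)) = (real i)^2"
  proof -
    have "2 powr (2 * log 2 (real i)) = (2 powr (log 2 (real i))) powr 2"
      by (simp add: powr_powr mult.commute)
    also have "\<dots> = (real i) ^ 2" using i4 by (simp add: powr_numeral)
    finally show ?thesis .
  qed
  moreover have "2 powr real (?N + 1) = 2 * 2 ^ ?N" by (simp only: powr_realpow) simp
  ultimately have key: "(real i)^2 \<le> 2 * 2 ^ ?N" by simp
  have "2 \<le> real ?N" using fl lg by linarith
  then show "1 \<le> ?N" by simp
  have p: "0 < (2::real) ^ ?N" by simp
  show "(1/2) ^ ?N \<le> 2 / (real i)^2"
    using key p i4 by (simp add: power_one_over divide_simps mult.commute)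
  have "4 * real i \<le> (real i)^2" using i4 by (simp add: power2_eq_square)
  then have "real i \<le> (2::real) ^ ?N" using key by linarith
  also have "(2::real) ^ ?N \<le> 4 ^ ?N" by (intro power_mono) auto
  finally show "(1/4::real) ^ ?N \<le> 1 / real i"
    using i4 by (simp add: power_one_over divide_simps)
qed

lemma floor_half: "of_int \<lfloor>real n / 2\<rfloor> = real (n div 2)"
proof -
  have "\<lfloor>real n / real 2\<rfloor> = int (n div 2)" by (rule floor_divide_of_nat_eq)
  then show ?thesis by simp
qed

lemma ceil_half: "of_int \<lceil>real n / 2\<rceil> = real ((n + 1) div 2)"
proof (cases "even n")
  case True
  then obtain a where "n = 2 * a" by auto
  then show ?thesis by simp
next
  case False
  then obtain a where a: "n = 2 * a + 1" using oddE by blast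
  have "real n / 2 = real a + 1/2" using a by simp
  then have "\<lceil>real n / 2\<rceil> = int a + 1" by (simp add: ceiling_eq_iff)
  then show ?thesis using a by simp
qed

lemma E_floor_eq:
  assumes "4 \<le> i"
  shows "expect_r i (\<lambda>r. of_int \<lfloor>real r / 2\<rfloor>) = (\<Sum>k = 1..max_probes i. QQ i (2 * k - 1))"
proof -
  let ?N = "max_probes i"
  have N1: "1 \<le> ?N" using maxp_facts[OF assms] by simp
  have c: "of_int \<lfloor>real (num_cmp i l) / 2\<rfloor> = (\<Sum>k = 1..?N. if Suc (2 * k - 1) \<le> num_cmp i l then 1 else 0 :: real)" for l
  proof -
    have "(\<Sum>k = 1..?N. if Suc (2 * k - 1) \<le> num_cmp i l then 1 else 0 :: real) =
          (\<Sum>k = 1..?N. if 2 * k \<le> num_cmp i l then 1 else 0)"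
      by (intro sum.cong) auto
    also have "\<dots> = real (min ?N (num_cmp i l div 2))" by (rule count_floor)
    also have "\<dots> = real (num_cmp i l div 2)" using numcmp_le[OF N1, of l] by simp
    finally show ?thesis using floor_half by simp
  qed
  show ?thesis
    unfolding expect_r_def QQ_def c sum_distrib_left
    by (rule sum.swap)
qed

lemma E_ceil_eq:
  assumes "4 \<le> i"
  shows "expect_r i (\<lambda>r. of_int \<lceil>real r / 2\<rceil>) = (\<Sum>k < max_probes i. QQ i (2 * k))"
proof -
  let ?N = "max_probes i"
  have N1: "1 \<le> ?N" using maxp_facts[OF assms] by simp
  have c: "of_int \<lceil>real (num_cmp i l) / 2\<rceil> = (\<Sum>k < ?N. if Suc (2 * k) \<le> num_cmp i l then 1 else 0 :: real)" for l
  proof -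
    have "(\<Sum>k < ?N. if Suc (2 * k) \<le> num_cmp i l then 1 else 0 :: real) =
          (\<Sum>k < ?N. if 2 * k + 1 \<le> num_cmp i l then 1 else 0)"
      by (intro sum.cong) auto
    also have "\<dots> = real (min ?N ((num_cmp i l + 1) div 2))" by (rule count_ceil)
    also have "\<dots> = real ((num_cmp i l + 1) div 2)" using numcmp_le[OF N1, of l] N1 by simp
    finally show ?thesis using ceil_half by simp
  qed
  show ?thesis
    unfolding expect_r_def QQ_def c sum_distrib_left
    by (rule sum.swap)
qed

lemma sum_abs_bound:
  fixes f g h :: "'a \<Rightarrow> real"
  assumes "\<And>k. k \<in> A \<Longrightarrow> \<bar>f k - g k\<bar> \<le> h k"
  shows "\<bar>sum f A - sum g A\<bar> \<le> sum h A"
proof -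
  have "\<bar>sum f A - sum g A\<bar> = \<bar>\<Sum>k\<in>A. f k - g k\<bar>" by (simp only: sum_subtractf)
  also have "\<dots> \<le> (\<Sum>k\<in>A. \<bar>f k - g k\<bar>)" by (rule sum_abs)
  also have "\<dots> \<le> sum h A" using assms by (rule sum_mono)
  finally show ?thesis .
qed

lemma floor_part:
  assumes "4 \<le> i"
  shows "\<bar>expect_r i (\<lambda>r. of_int \<lfloor>real r / 2\<rfloor>) - 2/3\<bar> \<le> 13 / real i"
proof -
  let ?N = "max_probes i"
  note mf = maxp_facts[OF assms]
  have i2: "2 \<le> i" using assms by simp
  have ri: "4 \<le> real i" using assms by simp
  have b: "\<bar>QQ i (2*k-1) - (1/2)^(2*k-1)\<bar> \<le> 6 / real i * (1/2)^(k-1)" if "k \<in> {1..?N}" for k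
  proof -
    have "vv (2*k-1) \<le> vv (2*(k-1))" using that by (intro vv_mono) auto
    also have "\<dots> = (1/2)^(k-1)" by (rule vv_even)
    finally have "6 * vv (2*k-1) / real i \<le> 6 / real i * (1/2)^(k-1)"
      using ri by (simp add: divide_simps)
    then show ?thesis using QQ_bound[OF i2 mf(1) mf(2), of "2*k-1"] vv_sq[of "2*k-1"] by simp
  qed
  have s: "(\<Sum>k = 1..?N. 6 / real i * (1/2::real)^(k-1)) \<le> 12 / real i"
  proof -
    have "(\<Sum>k = 1..?N. (1/2::real)^(k-1)) = (\<Sum>k < ?N. (1/2::real)^k)"
    proof -
      have "(\<Sum>k = 1..?N. (1/2::real)^(k-1)) = (\<Sum>k = Suc 0..Suc (?N - 1). (1/2::real)^(k-1))"
        using mf(1) by simp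
      also have "\<dots> = (\<Sum>k = 0..?N - 1. (1/2::real)^k)" by (simp only: sum.shift_bounds_cl_Suc_ivl) simp
      also have "\<dots> = (\<Sum>k < ?N. (1/2::real)^k)" using mf(1)
        by (metis Suc_diff_1 atLeast0AtMost lessThan_Suc_atMost less_le_trans zero_less_one)
      finally show ?thesis .
    qed
    then have "(\<Sum>k = 1..?N. (1/2::real)^(k-1)) \<le> 2" using geo3 by simp
    then have "6 / real i * (\<Sum>k = 1..?N. (1/2::real)^(k-1)) \<le> 6 / real i * 2"
      using ri by (intro mult_left_mono) auto
    then show ?thesis by (simp add: sum_distrib_left)
  qed
  have "\<bar>(\<Sum>k = 1..?N. QQ i (2 * k - 1)) - (\<Sum>k = 1..?N. (1/2::real)^(2*k-1))\<bar> \<le> (\<Sum>k = 1..?N. 6 / real i * (1/2::real)^(k-1))"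
    by (rule sum_abs_bound) (rule b)
  then have main: "\<bar>(\<Sum>k = 1..?N. QQ i (2 * k - 1)) - (\<Sum>k = 1..?N. (1/2::real)^(2*k-1))\<bar> \<le> 12 / real i"
    using s by linarith
  have t: "\<bar>(\<Sum>k = 1..?N. (1/2::real)^(2*k-1)) - 2/3\<bar> \<le> 1 / real i"
  proof -
    have q: "0 \<le> (1/4::real) ^ ?N" by simp
    have "\<bar>2/3 * (1 - (1/4::real) ^ ?N) - 2/3\<bar> = 2/3 * (1/4::real) ^ ?N" using q by (simp add: algebra_simps)
    then show ?thesis unfolding geo1 using mf(3) q by linarith
  qed
  show ?thesis unfolding E_floor_eq[OF assms] using main t by (simp add: abs_le_iff) linarith?
qed

lemma ceil_part:
  assumes "4 \<le> i"
  shows "\<bar>expect_r i (\<lambda>r. of_int \<lceil>real r / 2\<rceil>) - 4/3\<bar> \<le> 14 / real i"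
proof -
  let ?N = "max_probes i"
  note mf = maxp_facts[OF assms]
  have i2: "2 \<le> i" using assms by simp
  have ri: "4 \<le> real i" using assms by simp
  have b: "\<bar>QQ i (2*k) - (1/4)^k\<bar> \<le> 6 / real i * (1/2)^k" if "k \<in> {..<?N}" for k
  proof -
    have sq: "vv (2*k) ^ 2 = (1/4)^k" using vv_sq[of "2*k"] by (simp add: power_mult power_one_over)
    have "6 * vv (2*k) / real i = 6 / real i * (1/2)^k" using vv_even[of k] ri by simp
    then show ?thesis using QQ_bound[OF i2 mf(1) mf(2), of "2*k"] sq ri by simp
  qed
  have s: "(\<Sum>k < ?N. 6 / real i * (1/2::real)^k) \<le> 12 / real i"
  proof -
    have "6 / real i * (\<Sum>k < ?N. (1/2::real)^k) \<le> 6 / real i * 2"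
      using ri geo3 by (intro mult_left_mono) auto
    then show ?thesis by (simp add: sum_distrib_left)
  qed
  have "\<bar>(\<Sum>k < ?N. QQ i (2 * k)) - (\<Sum>k < ?N. (1/4::real)^k)\<bar> \<le> (\<Sum>k < ?N. 6 / real i * (1/2::real)^k)"
    by (rule sum_abs_bound) (rule b)
  then have main: "\<bar>(\<Sum>k < ?N. QQ i (2 * k)) - (\<Sum>k < ?N. (1/4::real)^k)\<bar> \<le> 12 / real i"
    using s by linarith
  have t: "\<bar>(\<Sum>k < ?N. (1/4::real)^k) - 4/3\<bar> \<le> 2 / real i"
  proof -
    have q: "0 \<le> (1/4::real) ^ ?N" by simp
    have "\<bar>4/3 * (1 - (1/4::real) ^ ?N) - 4/3\<bar> = 4/3 * (1/4::real) ^ ?N" using q by (simp add: algebra_simps)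
    moreover have "1 / real i \<le> 2 / real i" using ri by (simp add: divide_right_mono)
    moreover have "0 \<le> 1 / real i" by simp
    ultimately show ?thesis unfolding geo2 using mf(3) q by linarith
  qed
  show ?thesis unfolding E_ceil_eq[OF assms] using main t by (simp add: abs_le_iff) linarith?
qed

theorem lemma3:
  shows "\<exists>C. \<forall>i::nat. even i \<and> 4 \<le> i \<longrightarrow>
           \<bar>expect_r i (\<lambda>r. of_int \<lfloor>real r / 2\<rfloor>) - 2/3\<bar> \<le> C / real i \<and>
           \<bar>expect_r i (\<lambda>r. of_int \<lceil>real r / 2\<rceil>) - 4/3\<bar> \<le> C / real i"
proof (intro exI[of _ 14] allI impI conjI)
  fix i :: nat assume a: "even i \<and> 4 \<le> i"
  then have i4: "4 \<le> i" by simp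
  have "13 / real i \<le> 14 / real i" using i4 by (simp add: divide_right_mono)
  then show "\<bar>expect_r i (\<lambda>r. of_int \<lfloor>real r / 2\<rfloor>) - 2/3\<bar> \<le> 14 / real i"
    using floor_part[OF i4] by linarith
  show "\<bar>expect_r i (\<lambda>r. of_int \<lceil>real r / 2\<rceil>) - 4/3\<bar> \<le> 14 / real i"
    using ceil_part[OF i4] .
qed

end
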